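(* Let $1\le k\le d$, $\epsilon>0$, let $P\subset\mathbb{R}^d$ be a finite point set, and let $c(P)$ be the output of the Local Search algorithm (defined in the context) run on $P$ with parameters $k$ and $\epsilon$. Then for every $(k-1)$-dimensional linear subspace $\mathcal{H}$ of $\mathbb{R}^d$, $$h(c(P),\mathcal{H})\ge\frac{h(P,\mathcal{H})}{2k(1+\epsilon)}.$$
   Context: For a finite set $S\subset\mathbb{R}^d$ with $|S|=j$, $\mathrm{VOL}(S)$ denotes the $j$-dimensional volume of the parallelepiped spanned by the vectors of $S$. For a set $\mathcal{C}$ and points $p,q$, $\mathcal{C}+q-p$ denotes $(\mathcal{C}\setminus\{p\})\cup\{q\}$. The Local Search algorithm on input $P$, $k$, $\epsilon$: initialize $\mathcal{C}=\emptyset$; for $i=1,\dots,k$ add to $\mathcal{C}$ a point $\arg\max_{p\in P\setminus\mathcal{C}}\mathrm{VOL}(\mathcal{C}\cup\{p\})$; then repeat: if there are $q\in P\setminus\mathcal{C}$ and $p\in\mathcal{C}$ with $\mathrm{VOL}(\mathcal{C}+q-p)\ge(1+\epsilon)\mathrm{VOL}(\mathcal{C})$, replace $p$ by $q$; until no such pair exists; output $\mathcal{C}$. For a point set $Q$ and a subspace $\mathcal{H}$, $h(Q,\mathcal{H})=\max_{p\in Q}\mathrm{dist}(p,\mathcal{H})$, where $\mathrm{dist}(p,\mathcal{H})$ is the Euclidean distance from $p$ to $\mathcal{H}$ (the $k$-directional height). *)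

theory Defs
  imports "HOL-Analysis.Analysis"
begin

text \<open>j-dimensional volume of the parallelepiped spanned by the vectors of a finite set S:
  square root of the Gram determinant, written out via the Leibniz formula over
  permutations of S.\<close>
definition VOL :: "'a::euclidean_space set \<Rightarrow> real" where
  "VOL S = sqrt (\<Sum>\<pi> \<in> {\<pi>. \<pi> permutes S}. of_int (sign \<pi>) * (\<Prod>x\<in>S. x \<bullet> \<pi> x))"

text \<open>Greedy initialisation phase: greedy_run P i C means C is a possible content after i
  greedy additions (ties in the argmax may be broken arbitrarily).\<close>
inductive greedy_run :: "'a::euclidean_space set \<Rightarrow> nat \<Rightarrow> 'a set \<Rightarrow> bool" for P where
  start: "greedy_run P 0 {}"
| step: "greedy_run P i C \<Longrightarrow> p \<in> P - C \<Longrightarrow>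
          (\<forall>p'\<in>P - C. VOL (insert p' C) \<le> VOL (insert p C)) \<Longrightarrow>
          greedy_run P (Suc i) (insert p C)"

definition swap_step :: "'a::euclidean_space set \<Rightarrow> real \<Rightarrow> 'a set \<Rightarrow> 'a set \<Rightarrow> bool" where
  "swap_step P \<epsilon> C C' \<longleftrightarrow>
     (\<exists>p\<in>C. \<exists>q\<in>P - C. C' = insert q (C - {p}) \<and> VOL C' \<ge> (1 + \<epsilon>) * VOL C)"

definition LS_output :: "'a::euclidean_space set \<Rightarrow> nat \<Rightarrow> real \<Rightarrow> 'a set \<Rightarrow> bool" where
  "LS_output P k \<epsilon> C \<longleftrightarrow>
     (\<exists>C0. greedy_run P k C0 \<and> (swap_step P \<epsilon>)\<^sup>*\<^sup>* C0 C \<and> \<not> (\<exists>C'. swap_step P \<epsilon> C C'))"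

definition height :: "'a::euclidean_space set \<Rightarrow> 'a set \<Rightarrow> real" where
  "height Q H = Max ((\<lambda>p. infdist p H) ` Q)"

end

theory Submission
  imports Defs
begin


definition detS :: "'i set \<Rightarrow> ('i \<Rightarrow> 'i \<Rightarrow> real) \<Rightarrow> real" where
  "detS I A = (\<Sum>\<pi> \<in> {\<pi>. \<pi> permutes I}. of_int (sign \<pi>) * (\<Prod>i\<in>I. A i (\<pi> i)))"

lemma detS_cong:
  assumes "\<And>i j. i \<in> I \<Longrightarrow> j \<in> I \<Longrightarrow> A i j = B i j"
  shows "detS I A = detS I B"
  unfolding detS_def
proof (rule sum.cong[OF refl])
  fix \<pi> assume "\<pi> \<in> {\<pi>. \<pi> permutes I}"
  then have p: "\<pi> permutes I" by simp
  show "of_int (sign \<pi>) * (\<Prod>i\<in>I. A i (\<pi> i)) = of_int (sign \<pi>) * (\<Prod>i\<in>I. B i (\<pi> i))"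
    using assms permutes_in_image[OF p] by (auto intro!: prod.cong)
qed

lemma detS_transpose:
  assumes fin: "finite I"
  shows "detS I (\<lambda>i j. A j i) = detS I A"
proof -
  have "detS I (\<lambda>i j. A j i) = (\<Sum>\<pi> \<in> {\<pi>. \<pi> permutes I}. of_int (sign (inv \<pi>)) * (\<Prod>i\<in>I. A (inv \<pi> i) i))"
    unfolding detS_def by (subst sum_permutations_inverse) simp
  also have "\<dots> = detS I A"
    unfolding detS_def
  proof (rule sum.cong[OF refl])
    fix \<pi> assume "\<pi> \<in> {\<pi>. \<pi> permutes I}"
    then have p: "\<pi> permutes I" by simp
    have s: "sign (inv \<pi>) = sign \<pi>"
      by (metis sign_inverse fin p permutation_permutes)
    have "(\<Prod>i\<in>I. A (inv \<pi> i) i) = (\<Prod>i\<in>\<pi> ` I. A (inv \<pi> i) i)"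
      using permutes_image[OF p] by simp
    also have "\<dots> = (\<Prod>j\<in>I. A (inv \<pi> (\<pi> j)) (\<pi> j))"
      by (rule prod.reindex[unfolded comp_def]) (meson inj_on_subset permutes_inj p subset_UNIV)
    also have "\<dots> = (\<Prod>j\<in>I. A j (\<pi> j))"
      using permutes_inverses(2)[OF p] by simp
    finally show "of_int (sign (inv \<pi>)) * (\<Prod>i\<in>I. A (inv \<pi> i) i) = of_int (sign \<pi>) * (\<Prod>i\<in>I. A i (\<pi> i))"
      using s by simp
  qed
  finally show ?thesis .
qed

lemma detS_equal_rows:
  assumes fin: "finite I" and ab: "a \<in> I" "b \<in> I" "a \<noteq> b" and eq: "\<And>j. A a j = A b j"
  shows "detS I A = 0"
proof -
  let ?t = "Transposition.transpose a b"
  let ?f = "\<lambda>\<pi>. of_int (sign \<pi>) * (\<Prod>i\<in>I. A i (\<pi> i))"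
  have tp: "?t permutes I" using ab by (simp add: permutes_swap_id)
  have "detS I A = (\<Sum>\<pi> \<in> {\<pi>. \<pi> permutes I}. ?f (\<pi> \<circ> ?t))"
    unfolding detS_def by (rule sum_permutations_compose_right[OF tp])
  also have "\<dots> = (\<Sum>\<pi> \<in> {\<pi>. \<pi> permutes I}. - ?f \<pi>)"
  proof (rule sum.cong[OF refl])
    fix \<pi> assume "\<pi> \<in> {\<pi>. \<pi> permutes I}"
    then have p: "\<pi> permutes I" by simp
    have s: "sign (\<pi> \<circ> ?t) = - sign \<pi>"
      using sign_compose[of \<pi> ?t] p tp fin ab(3) sign_swap_id[of a b]
      by (metis mult.right_neutral mult_minus_right permutation_permutes)
    have "(\<Prod>i\<in>I. A i ((\<pi> \<circ> ?t) i)) = (\<Prod>i\<in>?t ` I. A i (\<pi> (?t i)))"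
      using permutes_image[OF tp] by simp
    also have "\<dots> = (\<Prod>j\<in>I. A (?t j) (\<pi> (?t (?t j))))"
      by (rule prod.reindex[unfolded comp_def]) simp
    also have "\<dots> = (\<Prod>j\<in>I. A j (\<pi> j))"
    proof (rule prod.cong[OF refl])
      fix j assume "j \<in> I"
      show "A (?t j) (\<pi> (?t (?t j))) = A j (\<pi> j)"
      proof -
        have tt: "?t (?t j) = j" by (simp add: Transposition.transpose_def)
        have "A (?t j) = A j"
          by (cases "j = a"; cases "j = b") (use eq ab(3) in \<open>auto simp: Transposition.transpose_def\<close>)
        then show ?thesis using tt by simp
      qed
    qed
    finally show "?f (\<pi> \<circ> ?t) = - ?f \<pi>" using s by simp
  qed
  also have "\<dots> = - detS I A" unfolding detS_def by (simp add: sum_negf)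
  finally show ?thesis by simp
qed

lemma detS_block:
  assumes fin: "finite S" and pS: "p \<notin> S" and z: "\<And>j. j \<in> S \<Longrightarrow> A p j = 0"
  shows "detS (insert p S) A = A p p * detS S A"
proof -
  let ?f = "\<lambda>\<pi>. of_int (sign \<pi>) * (\<Prod>i\<in>insert p S. A i (\<pi> i))"
  have sub: "{\<pi>. \<pi> permutes S} \<subseteq> {\<pi>. \<pi> permutes insert p S}"
    by (auto intro: permutes_subset)
  have "detS (insert p S) A = sum ?f {\<pi>. \<pi> permutes S}"
    unfolding detS_def
  proof (rule sum.mono_neutral_right[OF _ sub])
    show "finite {\<pi>. \<pi> permutes insert p S}" using fin by (simp add: finite_permutations)
    show "\<forall>\<pi>\<in>{\<pi>. \<pi> permutes insert p S} - {\<pi>. \<pi> permutes S}. ?f \<pi> = 0"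
    proof
      fix \<pi> assume a: "\<pi> \<in> {\<pi>. \<pi> permutes insert p S} - {\<pi>. \<pi> permutes S}"
      then have p: "\<pi> permutes insert p S" and np: "\<not> \<pi> permutes S" by auto
      have "\<pi> p \<noteq> p"
      proof
        assume "\<pi> p = p"
        then have "\<pi> permutes S" using permutes_superset[OF p, of S] by auto
        with np show False by simp
      qed
      moreover have "\<pi> p \<in> insert p S" using permutes_in_image[OF p] by simp
      ultimately have "A p (\<pi> p) = 0" using z by auto
      then have "(\<Prod>i\<in>insert p S. A i (\<pi> i)) = 0"
        using fin by (simp add: prod.insert[OF fin pS])
      then show "?f \<pi> = 0" by simp
    qed
  qed
  also have "\<dots> = (\<Sum>\<pi>\<in>{\<pi>. \<pi> permutes S}. A p p * (of_int (sign \<pi>) * (\<Prod>i\<in>S. A i (\<pi> i))))"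
  proof (rule sum.cong[OF refl])
    fix \<pi> assume "\<pi> \<in> {\<pi>. \<pi> permutes S}"
    then have p: "\<pi> permutes S" by simp
    then have "\<pi> p = p" using pS by (simp add: permutes_not_in)
    then show "?f \<pi> = A p p * (of_int (sign \<pi>) * (\<Prod>i\<in>S. A i (\<pi> i)))"
      by (simp add: prod.insert[OF fin pS])
  qed
  also have "\<dots> = A p p * detS S A" unfolding detS_def by (simp add: sum_distrib_left)
  finally show ?thesis .
qed


definition DG :: "'i set \<Rightarrow> ('i \<Rightarrow> 'a::euclidean_space) \<Rightarrow> ('i \<Rightarrow> 'a) \<Rightarrow> real" where
  "DG I f g = detS I (\<lambda>i j. f i \<bullet> g j)"

lemma DG_sym: "finite I \<Longrightarrow> DG I f g = DG I g f"
  unfolding DG_def by (subst detS_transpose[symmetric]) (simp_all add: inner_commute)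

lemma DG_row:
  assumes fin: "finite I" and pI: "p \<in> I" and sp: "f p - v \<in> span (f ` (I - {p}))"
  shows "DG I f g = DG I (f(p := v)) g"
proof -
  define w where "w = (\<Sum>\<pi> \<in> {\<pi>. \<pi> permutes I}. (of_int (sign \<pi>) * (\<Prod>i\<in>I - {p}. f i \<bullet> g (\<pi> i))) *\<^sub>R g (\<pi> p))"
  have key: "DG I h g = h p \<bullet> w" if hf: "\<And>i. i \<in> I - {p} \<Longrightarrow> h i = f i" for h
  proof -
    have "DG I h g = (\<Sum>\<pi> \<in> {\<pi>. \<pi> permutes I}. h p \<bullet> ((of_int (sign \<pi>) * (\<Prod>i\<in>I - {p}. f i \<bullet> g (\<pi> i))) *\<^sub>R g (\<pi> p)))"
      unfolding DG_def detS_def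
    proof (rule sum.cong[OF refl])
      fix \<pi> assume "\<pi> \<in> {\<pi>. \<pi> permutes I}"
      have "(\<Prod>i\<in>I. h i \<bullet> g (\<pi> i)) = (h p \<bullet> g (\<pi> p)) * (\<Prod>i\<in>I - {p}. h i \<bullet> g (\<pi> i))"
        using prod.remove[OF fin pI] by simp
      also have "(\<Prod>i\<in>I - {p}. h i \<bullet> g (\<pi> i)) = (\<Prod>i\<in>I - {p}. f i \<bullet> g (\<pi> i))"
        using hf by (auto intro: prod.cong)
      finally show "of_int (sign \<pi>) * (\<Prod>i\<in>I. h i \<bullet> g (\<pi> i)) = h p \<bullet> ((of_int (sign \<pi>) * (\<Prod>i\<in>I - {p}. f i \<bullet> g (\<pi> i))) *\<^sub>R g (\<pi> p))"
        by (simp add: inner_scaleR_right)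
    qed
    also have "\<dots> = h p \<bullet> w" unfolding w_def by (simp add: inner_sum_right)
    finally show ?thesis .
  qed
  have orth: "y \<bullet> w = 0" if yin: "y \<in> f ` (I - {p})" for y
  proof -
    obtain s where s: "s \<in> I" "s \<noteq> p" "y = f s" using yin by auto
    have "DG I (f(p := f s)) g = 0"
      unfolding DG_def by (rule detS_equal_rows[OF fin pI s(1) s(2)[symmetric]]) simp
    moreover have "DG I (f(p := f s)) g = f s \<bullet> w" using key[of "f(p := f s)"] by simp
    ultimately show ?thesis using s by simp
  qed
  have "(f p - v) \<bullet> w = 0"
    using orthogonal_to_span[OF sp, of w] orth by (simp add: orthogonal_def inner_commute)
  then have "f p \<bullet> w = v \<bullet> w" by (simp add: inner_diff_left)
  then show ?thesis using key[of f] key[of "f(p := v)"] by simp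
qed

lemma DG_insert:
  fixes S :: "'a::euclidean_space set"
  assumes fin: "finite S" and pS: "p \<notin> S" and sS: "s \<in> span S"
    and rS: "\<And>w. w \<in> span S \<Longrightarrow> r \<bullet> w = 0" and pe: "p = s + r"
  shows "DG (insert p S) id id = (r \<bullet> r) * DG S id id"
proof -
  let ?I = "insert p S"
  let ?f = "id(p := r)"
  have fI: "finite ?I" using fin by simp
  have IS: "?I - {p} = S" using pS by auto
  have sp: "id p - r \<in> span (id ` (?I - {p}))" using IS pe sS by simp
  have "DG ?I id id = DG ?I ?f id" by (rule DG_row[OF fI _ sp]) simp
  also have "\<dots> = DG ?I id ?f" by (rule DG_sym[OF fI])
  also have "\<dots> = DG ?I ?f ?f" by (rule DG_row[OF fI _ sp]) simp
  also have "\<dots> = (r \<bullet> r) * DG S ?f ?f"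
    unfolding DG_def
  proof (subst detS_block[OF fin pS])
    fix j assume "j \<in> S"
    then have "j \<noteq> p" "r \<bullet> j = 0" using pS rS span_base by auto
    then show "?f p \<bullet> ?f j = 0" by simp
  qed simp
  also have "DG S ?f ?f = DG S id id"
    unfolding DG_def by (rule detS_cong) (use pS in auto)
  finally show ?thesis .
qed

lemma DG_empty: "DG {} f g = 1"
  unfolding DG_def detS_def by simp

lemma DG_nonneg:
  fixes S :: "'a::euclidean_space set"
  assumes "finite S" shows "DG S id id \<ge> 0"
  using assms
proof (induction S rule: finite_induct)
  case empty then show ?case by (simp add: DG_empty)
next
  case (insert p S)
  obtain s r where "s \<in> span S" "\<And>w. w \<in> span S \<Longrightarrow> orthogonal r w" "p = s + r"
    using orthogonal_subspace_decomp_exists[of S p] by metis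
  then have "DG (insert p S) id id = (r \<bullet> r) * DG S id id"
    using DG_insert[OF insert(1,2)] by (simp add: orthogonal_def)
  then show ?case using insert(3) by (metis mult_nonneg_nonneg inner_ge_zero)
qed

lemma VOL_DG: "VOL S = sqrt (DG S id id)"
  unfolding VOL_def DG_def detS_def by simp



lemma VOL_insert:
  fixes S :: "'a::euclidean_space set"
  assumes fin: "finite S" and pS: "p \<notin> S" and sS: "s \<in> span S"
    and rS: "\<And>w. w \<in> span S \<Longrightarrow> r \<bullet> w = 0" and pe: "p = s + r"
  shows "VOL (insert p S) = norm r * VOL S"
  using DG_insert[OF assms] by (simp add: VOL_DG real_sqrt_mult norm_eq_sqrt_inner)

lemma VOL_nonneg: "finite S \<Longrightarrow> VOL S \<ge> 0"
  unfolding VOL_DG using DG_nonneg by simp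

lemma infdist_decomp:
  fixes x :: "'a::euclidean_space"
  assumes V: "subspace V" and y: "y \<in> V" and z: "\<And>w. w \<in> V \<Longrightarrow> z \<bullet> w = 0" and x: "x = y + z"
  shows "infdist x V = norm z"
proof (rule antisym)
  show "infdist x V \<le> norm z" using infdist_le[OF y, of x] x by (simp add: dist_norm)
  have ne: "V \<noteq> {}" using y by auto
  show "norm z \<le> infdist x V"
    unfolding infdist_notempty[OF ne]
  proof (rule cINF_greatest[OF ne])
    fix v assume v: "v \<in> V"
    have yv: "y - v \<in> V" using V y v by (simp add: subspace_diff)
    have "orthogonal z (y - v)" using z[OF yv] by (simp add: orthogonal_def)
    then have "(norm (z + (y - v)))\<^sup>2 = (norm z)\<^sup>2 + (norm (y - v))\<^sup>2" by (rule norm_add_Pythagorean)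
    then have "(norm z)\<^sup>2 \<le> (norm (z + (y - v)))\<^sup>2" by simp
    then have "norm z \<le> norm (z + (y - v))" by (simp add: power2_le_iff_abs_le)
    also have "z + (y - v) = x - v" using x by simp
    finally show "norm z \<le> dist x v" by (simp add: dist_norm)
  qed
qed

lemma greedy_props: "greedy_run P i C \<Longrightarrow> C \<subseteq> P \<and> finite C \<and> card C = i"
  by (induction rule: greedy_run.induct) auto

lemma swap_props:
  assumes "(swap_step P \<epsilon>)\<^sup>*\<^sup>* C0 C" "C0 \<subseteq> P" "finite C0" "card C0 = k"
  shows "C \<subseteq> P \<and> finite C \<and> card C = k"
  using assms
proof (induction rule: rtranclp_induct)
  case base then show ?case by simp
next
  case (step C C')
  then obtain p q where pq: "p \<in> C" "q \<in> P - C" "C' = insert q (C - {p})"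
    unfolding swap_step_def by auto
  from step have IH: "C \<subseteq> P" "finite C" "card C = k" by auto
  have "card C' = card (C - {p}) + 1" using pq IH by (simp add: card_insert_if)
  also have "\<dots> = k"
  proof -
    have k0: "k > 0" using pq IH card_gt_0_iff by blast
    then show ?thesis using pq IH by (simp add: card_Diff_singleton)
  qed
  finally show ?case using pq IH by auto
qed



lemma core:
  fixes C P H :: "(real ^ 'd) set" and k :: nat and \<epsilon> :: real and p :: "real ^ 'd"
  assumes finC: "finite C" and cardC: "card C = k" and k1: "1 \<le> k"
    and Vpos: "VOL C > 0"
    and noswap: "\<And>c. c \<in> C \<Longrightarrow> VOL (insert p (C - {c})) < (1 + \<epsilon>) * VOL C"
    and H: "subspace H" and dimH: "dim H = k - 1" and eps: "\<epsilon> > 0" and pC: "p \<notin> C"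
  shows "infdist p H \<le> 2 * real k * (1 + \<epsilon>) * Max ((\<lambda>c. infdist c H) ` C)"
proof -
  define hC where "hC = Max ((\<lambda>c. infdist c H) ` C)"
  have Cne: "C \<noteq> {}" using cardC k1 by auto
  have hC_ge: "infdist c H \<le> hC" if "c \<in> C" for c
    unfolding hC_def using finC that by (intro Max_ge) auto
  have "\<forall>c. \<exists>y z. y \<in> span (C - {c}) \<and> (\<forall>w\<in>span (C - {c}). z \<bullet> w = 0) \<and> c = y + z"
    using orthogonal_subspace_decomp_exists by (metis orthogonal_def)
  then obtain t e where te: "\<And>c. t c \<in> span (C - {c})" "\<And>c w. w \<in> span (C - {c}) \<Longrightarrow> e c \<bullet> w = 0"
    "\<And>c. c = t c + e c"
    by metis
  have finC': "finite (C - {c})" for c using finC by simp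
  have VC: "VOL C = norm (e c) * VOL (C - {c})" if "c \<in> C" for c
  proof -
    have "VOL (insert c (C - {c})) = norm (e c) * VOL (C - {c})"
      by (rule VOL_insert[OF finC' _ te(1) te(2) te(3)]) auto
    then show ?thesis using that by (simp add: insert_absorb)
  qed
  have Vc_pos: "VOL (C - {c}) > 0" and ec_pos: "norm (e c) > 0" if "c \<in> C" for c
    using VC[OF that] Vpos VOL_nonneg[OF finC'[of c]] norm_ge_zero[of "e c"]
    by (metis mult_eq_0_iff order_less_le)+
  have indep: "independent C"
  proof
    assume "dependent C"
    then obtain a where a: "a \<in> C" "a \<in> span (C - {a})" by (auto simp: dependent_def)
    have "VOL (insert a (C - {a})) = norm (0::real^'d) * VOL (C - {a})"
      by (rule VOL_insert[OF finC' _ a(2)]) auto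
    then show False using a Vpos by (simp add: insert_absorb)
  qed
  have dimC: "dim (span C) = k" using indep cardC by (simp add: dim_eq_card_independent)
  have ec_span: "e c \<in> span C" if "c \<in> C" for c
  proof -
    have "t c \<in> span C" using te(1)[of c] span_mono[of "C - {c}" C] by auto
    moreover have "c \<in> span C" using that by (simp add: span_base)
    ultimately have "c - t c \<in> span C" by (simp add: span_diff)
    moreover have "c - t c = e c" using te(3)[of c] by (metis add_diff_cancel_left')
    ultimately show ?thesis by simp
  qed
  have split: "(\<Sum>c'\<in>C. \<gamma> c' *\<^sub>R c') - \<gamma> c *\<^sub>R e c \<in> span (C - {c})" if "c \<in> C" for c \<gamma>
  proof -
    have "(\<Sum>c'\<in>C. \<gamma> c' *\<^sub>R c') = \<gamma> c *\<^sub>R c + (\<Sum>c'\<in>C - {c}. \<gamma> c' *\<^sub>R c')"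
      using sum.remove[OF finC that] by simp
    also have "\<gamma> c *\<^sub>R c = \<gamma> c *\<^sub>R t c + \<gamma> c *\<^sub>R e c"
      using te(3)[of c] by (metis scaleR_add_right)
    finally have eq: "(\<Sum>c'\<in>C. \<gamma> c' *\<^sub>R c') - \<gamma> c *\<^sub>R e c = \<gamma> c *\<^sub>R t c + (\<Sum>c'\<in>C - {c}. \<gamma> c' *\<^sub>R c')"
      by simp
    show ?thesis unfolding eq
      by (intro span_add span_scale span_sum te(1)) (auto intro: span_base)
  qed
  
  obtain s r where sr: "s \<in> span C" "\<And>w. w \<in> span C \<Longrightarrow> r \<bullet> w = 0" "p = s + r"
    using orthogonal_subspace_decomp_exists[of C p] by (metis orthogonal_def)
  obtain \<alpha> where \<alpha>: "s = (\<Sum>c\<in>C. \<alpha> c *\<^sub>R c)"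
    using sr(1) span_finite[OF finC] by auto
  have bounds: "\<bar>\<alpha> c\<bar> \<le> 1 + \<epsilon> \<and> norm r \<le> (1 + \<epsilon>) * norm (e c)" if cC: "c \<in> C" for c
  proof -
    define rc where "rc = \<alpha> c *\<^sub>R e c + r"
    have s1: "s - \<alpha> c *\<^sub>R e c \<in> span (C - {c})" using split[OF cC, of \<alpha>] \<alpha> by simp
    have s2: "rc \<bullet> w = 0" if "w \<in> span (C - {c})" for w
    proof -
      have "w \<in> span C" using that span_mono[of "C - {c}" C] by auto
      then show ?thesis using te(2)[OF that] sr(2) unfolding rc_def by (simp add: inner_add_left)
    qed
    have pe: "p = (s - \<alpha> c *\<^sub>R e c) + rc" unfolding rc_def using sr(3) by simp
    have "VOL (insert p (C - {c})) = norm rc * VOL (C - {c})"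
      by (rule VOL_insert[OF finC' _ s1 s2 pe]) (use pC in auto)
    then have "norm rc * VOL (C - {c}) < (1 + \<epsilon>) * (norm (e c) * VOL (C - {c}))"
      using noswap[OF cC] VC[OF cC] by simp
    then have lt: "norm rc < (1 + \<epsilon>) * norm (e c)"
      using Vc_pos[OF cC] by (simp add: mult.assoc[symmetric] mult_less_cancel_right)
    have "orthogonal (\<alpha> c *\<^sub>R e c) r"
      using sr(2)[OF ec_span[OF cC]] by (simp add: orthogonal_def inner_commute)
    then have pyth: "(norm rc)\<^sup>2 = (norm (\<alpha> c *\<^sub>R e c))\<^sup>2 + (norm r)\<^sup>2"
      unfolding rc_def by (rule norm_add_Pythagorean)
    have sq: "(norm rc)\<^sup>2 \<le> ((1 + \<epsilon>) * norm (e c))\<^sup>2"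
      using lt by (intro power_mono) auto
    have pyth': "(norm rc)\<^sup>2 = (\<bar>\<alpha> c\<bar> * norm (e c))\<^sup>2 + (norm r)\<^sup>2" using pyth by simp
    have "(\<bar>\<alpha> c\<bar> * norm (e c))\<^sup>2 \<le> ((1 + \<epsilon>) * norm (e c))\<^sup>2"
      using pyth' sq zero_le_power2[of "norm r"] by linarith
    then have "\<bar>\<alpha> c\<bar> * norm (e c) \<le> (1 + \<epsilon>) * norm (e c)"
      using eps by (simp add: power2_le_iff_abs_le)
    then have A: "\<bar>\<alpha> c\<bar> \<le> 1 + \<epsilon>" using ec_pos[OF cC] by simp
    have "(norm r)\<^sup>2 \<le> ((1 + \<epsilon>) * norm (e c))\<^sup>2"
      using pyth' sq zero_le_power2[of "\<bar>\<alpha> c\<bar> * norm (e c)"] by linarith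
    then have B: "norm r \<le> (1 + \<epsilon>) * norm (e c)"
      using eps by (simp add: power2_le_iff_abs_le)
    show ?thesis using A B by simp
  qed
  
  define U where "U = {y. \<forall>x\<in>H. orthogonal x y}"
  have subU: "subspace U" unfolding U_def by (rule subspace_orthogonal_to_vectors)
  have dU: "dim U + (k - 1) = CARD('d)"
    using dim_subspace_orthogonal_to_vectors[of H UNIV] H dimH unfolding U_def by simp
  have dSI: "dim {x + y |x y. x \<in> span C \<and> y \<in> U} + dim (span C \<inter> U) = dim (span C) + dim U"
    by (rule dim_sums_Int[OF subspace_span subU])
  have "dim {x + y |x y. x \<in> span C \<and> y \<in> U} \<le> CARD('d)" by (rule dim_subset_UNIV_cart)
  then have "dim (span C \<inter> U) \<noteq> 0" using dU dSI dimC k1 by linarith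
  then obtain u where u: "u \<in> span C" "u \<in> U" "u \<noteq> 0" by (auto simp: dim_eq_0)
  have nu: "norm u > 0" using u(3) by simp
  
  have "\<forall>c. \<exists>y z. y \<in> span H \<and> (\<forall>w\<in>span H. z \<bullet> w = 0) \<and> c = y + z"
    using orthogonal_subspace_decomp_exists by (metis orthogonal_def)
  then obtain a b where ab: "\<And>c. a c \<in> H" "\<And>c w. w \<in> H \<Longrightarrow> b c \<bullet> w = 0"
    "\<And>c. c = a c + b c"
    using H by (metis span_eq_iff)
  have bC: "norm (b c) \<le> hC" if "c \<in> C" for c
    using infdist_decomp[OF H ab(1) ab(2) ab(3)] hC_ge[OF that] by simp
  have hC0: "hC \<ge> 0" using bC Cne norm_ge_zero by (meson ex_in_conv order_trans)
  obtain \<beta> where \<beta>: "u = (\<Sum>c\<in>C. \<beta> c *\<^sub>R c)"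
    using u(1) span_finite[OF finC] by auto
  have uc: "\<bar>u \<bullet> c\<bar> \<le> norm u * hC" if "c \<in> C" for c
  proof -
    have "\<forall>x\<in>H. orthogonal x u" using u(2) unfolding U_def by simp
    then have "orthogonal (a c) u" using ab(1)[of c] by blast
    then have "a c \<bullet> u = 0" by (simp add: orthogonal_def)
    then have "u \<bullet> a c = 0" by (simp add: inner_commute)
    then have "u \<bullet> c = u \<bullet> b c" using ab(3)[of c] by (metis add_0 inner_add_right)
    also have "\<bar>u \<bullet> b c\<bar> \<le> norm u * norm (b c)" by (rule Cauchy_Schwarz_ineq2)
    also have "\<dots> \<le> norm u * hC" using bC[OF that] by (simp add: mult_left_mono)
    finally show ?thesis .
  qed
  have uu: "u \<bullet> u = u \<bullet> (\<Sum>c\<in>C. \<beta> c *\<^sub>R c)" by (subst (2) \<beta>) (rule refl)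
  have "(norm u)\<^sup>2 = (\<Sum>c\<in>C. \<beta> c * (u \<bullet> c))"
    unfolding power2_norm_eq_inner uu by (simp add: inner_sum_right)
  also have "\<dots> \<le> (\<Sum>c\<in>C. \<bar>\<beta> c\<bar> * (norm u * hC))"
  proof (rule sum_mono)
    fix c assume "c \<in> C"
    have "\<beta> c * (u \<bullet> c) \<le> \<bar>\<beta> c\<bar> * \<bar>u \<bullet> c\<bar>" by (simp add: abs_mult[symmetric])
    also have "\<dots> \<le> \<bar>\<beta> c\<bar> * (norm u * hC)" using uc[OF \<open>c \<in> C\<close>] by (simp add: mult_left_mono)
    finally show "\<beta> c * (u \<bullet> c) \<le> \<bar>\<beta> c\<bar> * (norm u * hC)" .
  qed
  also have "\<dots> = norm u * (hC * (\<Sum>c\<in>C. \<bar>\<beta> c\<bar>))"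
    by (simp add: sum_distrib_left sum_distrib_right mult.commute mult.left_commute)
  finally have "norm u * norm u \<le> norm u * (hC * (\<Sum>c\<in>C. \<bar>\<beta> c\<bar>))" by (simp add: power2_eq_square)
  then have usum: "norm u \<le> hC * (\<Sum>c\<in>C. \<bar>\<beta> c\<bar>)" using nu by simp
  have "\<exists>c0\<in>C. norm u \<le> real k * hC * \<bar>\<beta> c0\<bar>"
  proof (rule ccontr)
    assume na: "\<not> (\<exists>c0\<in>C. norm u \<le> real k * hC * \<bar>\<beta> c0\<bar>)"
    then have lt: "real k * hC * \<bar>\<beta> c\<bar> < norm u" if "c \<in> C" for c
      using that by (meson not_le)
    have "(\<Sum>c\<in>C. real k * hC * \<bar>\<beta> c\<bar>) < (\<Sum>c\<in>C. norm u)"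
      by (rule sum_strict_mono[OF finC Cne lt])
    then have "real k * (hC * (\<Sum>c\<in>C. \<bar>\<beta> c\<bar>)) < real k * norm u"
      using cardC by (simp add: sum_distrib_left mult.assoc)
    then have "hC * (\<Sum>c\<in>C. \<bar>\<beta> c\<bar>) < norm u" using k1 by simp
    then show False using usum by simp
  qed
  then obtain c0 where c0: "c0 \<in> C" "norm u \<le> real k * hC * \<bar>\<beta> c0\<bar>" by blast
  have "\<bar>\<beta> c0\<bar> * norm (e c0) \<le> norm u"
  proof -
    define w where "w = u - \<beta> c0 *\<^sub>R e c0"
    have w: "w \<in> span (C - {c0})" unfolding w_def \<beta> by (rule split[OF c0(1)])
    have "orthogonal (\<beta> c0 *\<^sub>R e c0) w" using te(2)[OF w] by (simp add: orthogonal_def)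
    then have "(norm (\<beta> c0 *\<^sub>R e c0 + w))\<^sup>2 = (norm (\<beta> c0 *\<^sub>R e c0))\<^sup>2 + (norm w)\<^sup>2"
      by (rule norm_add_Pythagorean)
    then have "(norm u)\<^sup>2 = (\<bar>\<beta> c0\<bar> * norm (e c0))\<^sup>2 + (norm w)\<^sup>2" unfolding w_def by simp
    then have "(\<bar>\<beta> c0\<bar> * norm (e c0))\<^sup>2 \<le> (norm u)\<^sup>2" using zero_le_power2[of "norm w"] by linarith
    then show ?thesis by (simp add: power2_le_iff_abs_le)
  qed
  then have "\<bar>\<beta> c0\<bar> * norm (e c0) \<le> \<bar>\<beta> c0\<bar> * (real k * hC)" using c0(2) by (simp add: mult_ac)
  moreover have "\<bar>\<beta> c0\<bar> > 0" using c0(2) nu by (cases "\<beta> c0 = 0") auto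
  ultimately have ec0: "norm (e c0) \<le> real k * hC" by simp
  have rbound: "norm r \<le> (1 + \<epsilon>) * (real k * hC)"
    using bounds[OF c0(1)] ec0 eps by (meson less_eq_real_def mult_left_mono order_trans add_pos_pos zero_less_one)
  
  define y where "y = (\<Sum>c\<in>C. \<alpha> c *\<^sub>R a c)"
  have yH: "y \<in> H" unfolding y_def by (intro subspace_sum[OF H] subspace_scale[OF H] ab(1))
  have "p - y = (\<Sum>c\<in>C. \<alpha> c *\<^sub>R b c) + r"
  proof -
    have "s = (\<Sum>c\<in>C. \<alpha> c *\<^sub>R a c) + (\<Sum>c\<in>C. \<alpha> c *\<^sub>R b c)"
      unfolding \<alpha> sum.distrib[symmetric] scaleR_add_right[symmetric] using ab(3) by simp
    then show ?thesis using sr(3) unfolding y_def by simp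
  qed
  then have "infdist p H \<le> norm ((\<Sum>c\<in>C. \<alpha> c *\<^sub>R b c) + r)"
    using infdist_le[OF yH, of p] by (simp add: dist_norm)
  also have "\<dots> \<le> norm (\<Sum>c\<in>C. \<alpha> c *\<^sub>R b c) + norm r" by (rule norm_triangle_ineq)
  also have "norm (\<Sum>c\<in>C. \<alpha> c *\<^sub>R b c) \<le> (\<Sum>c\<in>C. \<bar>\<alpha> c\<bar> * norm (b c))"
    using norm_sum[of "\<lambda>c. \<alpha> c *\<^sub>R b c" C] by simp
  also have "\<dots> \<le> (\<Sum>c\<in>C. (1 + \<epsilon>) * hC)"
  proof (rule sum_mono)
    fix c assume cC: "c \<in> C"
    show "\<bar>\<alpha> c\<bar> * norm (b c) \<le> (1 + \<epsilon>) * hC"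
      using bounds[OF cC] bC[OF cC] eps by (intro mult_mono) auto
  qed
  also have "\<dots> = real k * (1 + \<epsilon>) * hC" using cardC by simp
  finally have "infdist p H \<le> real k * (1 + \<epsilon>) * hC + (1 + \<epsilon>) * (real k * hC)"
    using rbound by linarith
  then show ?thesis unfolding hC_def[symmetric] by (simp add: algebra_simps)
qed


theorem lemma4p1:
  fixes P C H :: "(real ^ 'd) set" and k :: nat and \<epsilon> :: real
  assumes "1 \<le> k" and "k \<le> CARD('d)" and "\<epsilon> > 0" and "finite P"
    and "LS_output P k \<epsilon> C"
    and "subspace H" and "dim H = k - 1"
  shows "height C H \<ge> height P H / (2 * real k * (1 + \<epsilon>))"
proof -
  note k1 = assms(1) and eps = assms(3) and finP = assms(4) and H = assms(6) and dimH = assms(7)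
  obtain C0 where C0: "greedy_run P k C0" "(swap_step P \<epsilon>)\<^sup>*\<^sup>* C0 C" "\<not> (\<exists>C'. swap_step P \<epsilon> C C')"
    using assms(5) unfolding LS_output_def by blast
  have "C0 \<subseteq> P \<and> finite C0 \<and> card C0 = k" by (rule greedy_props[OF C0(1)])
  then have "C \<subseteq> P \<and> finite C \<and> card C = k" using swap_props[OF C0(2)] by blast
  then have CP: "C \<subseteq> P" and finC: "finite C" and cardC: "card C = k" by auto
  have Cne: "C \<noteq> {}" using cardC k1 by auto
  define D where "D = 2 * real k * (1 + \<epsilon>)"
  have D1: "D \<ge> 1"
  proof -
    have "real k \<ge> 1" using k1 by simp
    then have "2 * real k \<ge> 1" by simp
    moreover have "1 + \<epsilon> \<ge> 1" using eps by simp
    ultimately have "1 * 1 \<le> 2 * real k * (1 + \<epsilon>)" by (intro mult_mono) auto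
    then show ?thesis unfolding D_def by simp
  qed
  have noswap: "VOL (insert q (C - {c})) < (1 + \<epsilon>) * VOL C" if "c \<in> C" "q \<in> P - C" for c q
  proof (rule ccontr)
    assume "\<not> VOL (insert q (C - {c})) < (1 + \<epsilon>) * VOL C"
    then have "swap_step P \<epsilon> C (insert q (C - {c}))"
      unfolding swap_step_def using that by auto
    then show False using C0(3) by blast
  qed
  have hPne: "height P H \<ge> 0"
  proof -
    obtain c where "c \<in> P" using Cne CP by auto
    then have "infdist c H \<le> height P H" unfolding height_def using finP by (intro Max_ge) auto
    then show ?thesis using infdist_nonneg[of c H] by linarith
  qed
  have hCne: "height C H \<ge> 0"
  proof -
    obtain c where "c \<in> C" using Cne by auto
    then have "infdist c H \<le> height C H" unfolding height_def using finC by (intro Max_ge) auto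
    then show ?thesis using infdist_nonneg[of c H] by linarith
  qed
  have main: "height P H \<le> D * height C H"
  proof (cases "VOL C = 0")
    case True
    have "P \<subseteq> C"
    proof
      fix q assume qP: "q \<in> P"
      show "q \<in> C"
      proof (rule ccontr)
        assume "q \<notin> C"
        obtain c where c: "c \<in> C" using Cne by auto
        have "VOL (insert q (C - {c})) \<ge> 0" using finC by (intro VOL_nonneg) simp
        then have "VOL (insert q (C - {c})) \<ge> (1 + \<epsilon>) * VOL C" using True by simp
        then show False using noswap[OF c] qP \<open>q \<notin> C\<close> by fastforce
      qed
    qed
    then have "C = P" using CP by auto
    moreover have "1 * height P H \<le> D * height P H" by (rule mult_right_mono[OF D1 hPne])
    ultimately show ?thesis by simp
  next
    case False
    then have Vpos: "VOL C > 0" using VOL_nonneg[OF finC] by simp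
    show ?thesis
      unfolding height_def[of P]
    proof (rule Max.boundedI)
      show "finite ((\<lambda>p. infdist p H) ` P)" using finP by simp
      show "(\<lambda>p. infdist p H) ` P \<noteq> {}" using Cne CP by auto
      fix x assume "x \<in> (\<lambda>p. infdist p H) ` P"
      then obtain p where pP: "p \<in> P" and x: "x = infdist p H" by auto
      show "x \<le> D * height C H"
      proof (cases "p \<in> C")
        case True
        then have "infdist p H \<le> height C H" unfolding height_def using finC by (intro Max_ge) auto
        also have "\<dots> = 1 * height C H" by simp
        also have "\<dots> \<le> D * height C H" by (rule mult_right_mono[OF D1 hCne])
        finally show ?thesis using x by simp
      next
        case pC: False
        have "infdist p H \<le> 2 * real k * (1 + \<epsilon>) * Max ((\<lambda>c. infdist c H) ` C)"
          by (rule core[OF finC cardC k1 Vpos _ H dimH eps pC]) (use noswap pP pC in auto)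
        then show ?thesis using x unfolding D_def height_def by simp
      qed
    qed
  qed
  have "D > 0" using D1 by simp
  then show ?thesis using main unfolding D_def[symmetric] by (simp add: pos_divide_le_eq mult.commute)
qed

end
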